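(* Let $\Gamma$ be a finite bipartite graph with $|V(\Gamma)|\geq 4$. The following are equivalent: (1) $P_5\not\leq\Gamma$ and $\Gamma$ is prime; (2) $\Gamma$ is critical; (3) $\Gamma$ is a half graph.
   Context: $P_5$ is the path on 5 vertices; $G\leq H$ means $G$ is isomorphic to an induced subgraph of $H$. A module of a graph is a set $M$ of vertices such that every vertex outside $M$ is adjacent to all or none of $M$; $\emptyset$, $V(\Gamma)$ and singletons are trivial; $\Gamma$ is prime if $|V(\Gamma)|\geq3$ and all modules are trivial; a prime graph is critical if $\Gamma-v$ is not prime for every vertex $v$. A bipartite graph with bipartition $\{X,Y\}$ is a half graph if there exist a linear order $L$ on $X$ and a bijection $\varphi:X\to Y$ with $E(\Gamma)=\{\{x,\varphi(x')\}: x\leq x'\bmod L\}$. *)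

theory Defs
  imports Main
begin

text \<open>A finite simple graph is given by a vertex set V and an adjacency relation E
  (only its restriction to V matters).\<close>

definition graph :: "'a set \<Rightarrow> ('a \<Rightarrow> 'a \<Rightarrow> bool) \<Rightarrow> bool" where
  "graph V E \<longleftrightarrow> finite V \<and> (\<forall>x\<in>V. \<forall>y\<in>V. E x y \<longleftrightarrow> E y x) \<and> (\<forall>x\<in>V. \<not> E x x)"

definition bipartition :: "'a set \<Rightarrow> ('a \<Rightarrow> 'a \<Rightarrow> bool) \<Rightarrow> 'a set \<Rightarrow> 'a set \<Rightarrow> bool" where
  "bipartition V E X Y \<longleftrightarrow> X \<union> Y = V \<and> X \<inter> Y = {} \<and>
     (\<forall>x\<in>V. \<forall>y\<in>V. E x y \<longrightarrow> (x \<in> X \<longleftrightarrow> y \<in> Y))"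

definition bipartite :: "'a set \<Rightarrow> ('a \<Rightarrow> 'a \<Rightarrow> bool) \<Rightarrow> bool" where
  "bipartite V E \<longleftrightarrow> (\<exists>X Y. bipartition V E X Y)"

definition is_module :: "'a set \<Rightarrow> ('a \<Rightarrow> 'a \<Rightarrow> bool) \<Rightarrow> 'a set \<Rightarrow> bool" where
  "is_module V E M \<longleftrightarrow> M \<subseteq> V \<and>
     (\<forall>v \<in> V - M. (\<forall>m\<in>M. E v m) \<or> (\<forall>m\<in>M. \<not> E v m))"

definition trivial_module :: "'a set \<Rightarrow> 'a set \<Rightarrow> bool" where
  "trivial_module V M \<longleftrightarrow> M = {} \<or> M = V \<or> card M = 1"

definition prime_graph :: "'a set \<Rightarrow> ('a \<Rightarrow> 'a \<Rightarrow> bool) \<Rightarrow> bool" where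
  "prime_graph V E \<longleftrightarrow> card V \<ge> 3 \<and> (\<forall>M. is_module V E M \<longrightarrow> trivial_module V M)"

definition critical :: "'a set \<Rightarrow> ('a \<Rightarrow> 'a \<Rightarrow> bool) \<Rightarrow> bool" where
  "critical V E \<longleftrightarrow> prime_graph V E \<and> (\<forall>v\<in>V. \<not> prime_graph (V - {v}) E)"

definition induced_le ::
  "'b set \<Rightarrow> ('b \<Rightarrow> 'b \<Rightarrow> bool) \<Rightarrow> 'a set \<Rightarrow> ('a \<Rightarrow> 'a \<Rightarrow> bool) \<Rightarrow> bool" where
  "induced_le W F V E \<longleftrightarrow> (\<exists>f. inj_on f W \<and> f ` W \<subseteq> V \<and>
       (\<forall>x\<in>W. \<forall>y\<in>W. F x y \<longleftrightarrow> E (f x) (f y)))"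

definition P5_V :: "nat set" where "P5_V = {0..<5}"
definition P5_E :: "nat \<Rightarrow> nat \<Rightarrow> bool" where "P5_E i j \<longleftrightarrow> i = j + 1 \<or> j = i + 1"

definition half_graph :: "'a set \<Rightarrow> ('a \<Rightarrow> 'a \<Rightarrow> bool) \<Rightarrow> bool" where
  "half_graph V E \<longleftrightarrow> (\<exists>X Y L \<phi>.
     X \<union> Y = V \<and> X \<inter> Y = {} \<and>
     linear_order_on X L \<and> bij_betw \<phi> X Y \<and>
     (\<forall>u\<in>V. \<forall>w\<in>V. E u w \<longleftrightarrow>
        (\<exists>x\<in>X. \<exists>x'\<in>X. (x, x') \<in> L \<and>
            ((u = x \<and> w = \<phi> x') \<or> (w = x \<and> u = \<phi> x')))))"

end

theory Submission
  imports Defs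
begin


definition conn :: "('a \<Rightarrow> 'a \<Rightarrow> bool) \<Rightarrow> 'a set \<Rightarrow> bool" where
  "conn E S \<longleftrightarrow> (\<forall>A. A \<subseteq> S \<longrightarrow> A \<noteq> {} \<longrightarrow> A \<noteq> S \<longrightarrow> (\<exists>a\<in>A. \<exists>b\<in>S - A. E a b))"

definition dist :: "('a \<Rightarrow> 'a \<Rightarrow> bool) \<Rightarrow> 'a set \<Rightarrow> 'a \<Rightarrow> 'a \<Rightarrow> bool" where
  "dist E S a b \<longleftrightarrow> (\<exists>w\<in>S - {a, b}. E w a \<noteq> E w b)"

definition twinfree :: "('a \<Rightarrow> 'a \<Rightarrow> bool) \<Rightarrow> 'a set \<Rightarrow> bool" where
  "twinfree E S \<longleftrightarrow> (\<forall>a\<in>S. \<forall>b\<in>S. a \<noteq> b \<longrightarrow> dist E S a b)"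

lemma dist_sym: "dist E S a b = dist E S b a"
  unfolding dist_def by (auto simp: insert_commute)

lemma dist_mono: "dist E S a b \<Longrightarrow> S \<subseteq> T \<Longrightarrow> dist E T a b"
  unfolding dist_def by blast

lemma conn_single: "conn E {a}"
  unfolding conn_def by auto

locale bip =
  fixes V :: "'a set" and E :: "'a \<Rightarrow> 'a \<Rightarrow> bool" and X Y :: "'a set"
  assumes gr: "graph V E" and bp: "bipartition V E X Y"
begin

lemma fin: "finite V" using gr unfolding graph_def by auto

lemma sym: "a \<in> V \<Longrightarrow> b \<in> V \<Longrightarrow> E a b \<Longrightarrow> E b a"
  using gr unfolding graph_def by auto

lemma irr: "a \<in> V \<Longrightarrow> \<not> E a a"
  using gr unfolding graph_def by auto

lemma XY: "X \<union> Y = V" "X \<inter> Y = {}"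
  using bp unfolding bipartition_def by auto

lemma side: "a \<in> V \<Longrightarrow> b \<in> V \<Longrightarrow> E a b \<Longrightarrow> (a \<in> X \<longleftrightarrow> b \<in> Y)"
  using bp unfolding bipartition_def by auto

lemma notri: "a \<in> V \<Longrightarrow> b \<in> V \<Longrightarrow> c \<in> V \<Longrightarrow> E a b \<Longrightarrow> E b c \<Longrightarrow> \<not> E a c"
  using side XY by blast

lemma sameX: "a \<in> X \<Longrightarrow> b \<in> X \<Longrightarrow> \<not> E a b"
  using side XY by blast

lemma sameY: "a \<in> Y \<Longrightarrow> b \<in> Y \<Longrightarrow> \<not> E a b"
  using side XY by blast

lemma PC:
  assumes S: "S \<subseteq> V" and c: "card S \<ge> 3"
  shows "prime_graph S E \<longleftrightarrow> twinfree E S \<and> conn E S"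
proof
  assume p: "prime_graph S E"
  have fS: "finite S" using finite_subset[OF S fin] .
  have tf: "twinfree E S"
    unfolding twinfree_def
  proof (intro ballI impI)
    fix a b assume ab: "a \<in> S" "b \<in> S" "a \<noteq> b"
    show "dist E S a b"
    proof (rule ccontr)
      assume nd: "\<not> dist E S a b"
      have "is_module S E {a, b}"
        unfolding is_module_def
      proof (intro conjI ballI)
        show "{a,b} \<subseteq> S" using ab by auto
        fix v assume v: "v \<in> S - {a,b}"
        have "E v a = E v b" using nd v unfolding dist_def by blast
        then show "(\<forall>m\<in>{a,b}. E v m) \<or> (\<forall>m\<in>{a,b}. \<not> E v m)" by auto
      qed
      hence "trivial_module S {a,b}" using p unfolding prime_graph_def by blast
      moreover have "card {a,b} = 2" using ab by simp
      moreover have "{a,b} \<noteq> S" using c calculation(2) by auto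
      ultimately show False unfolding trivial_module_def by auto
    qed
  qed
  have cn: "conn E S"
    unfolding conn_def
  proof (intro allI impI)
    fix A assume A: "A \<subseteq> S" "A \<noteq> {}" "A \<noteq> S"
    show "\<exists>a\<in>A. \<exists>b\<in>S - A. E a b"
    proof (rule ccontr)
      assume ne: "\<not> ?thesis"
      have ne2: "\<And>a b. a \<in> A \<Longrightarrow> b \<in> S - A \<Longrightarrow> \<not> E b a"
      proof -
        fix a b assume "a \<in> A" "b \<in> S - A"
        then show "\<not> E b a" using ne sym[of b a] A S by blast
      qed
      have m1: "is_module S E A"
        unfolding is_module_def using A ne2 by blast
      have m2: "is_module S E (S - A)"
        unfolding is_module_def using A ne by blast
      have t1: "trivial_module S A" using m1 p unfolding prime_graph_def by blast
      have t2: "trivial_module S (S - A)" using m2 p unfolding prime_graph_def by blast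
      have "card A = 1" using t1 A unfolding trivial_module_def by auto
      moreover have "S - A \<noteq> {}" "S - A \<noteq> S" using A by auto
      moreover have "card (S - A) = 1" using t2 calculation unfolding trivial_module_def by auto
      moreover have "card (S - A) = card S - card A" using A fS by (meson card_Diff_subset finite_subset)
      ultimately show False using c by simp
    qed
  qed
  show "twinfree E S \<and> conn E S" using tf cn by blast
next
  assume tc: "twinfree E S \<and> conn E S"
  show "prime_graph S E"
    unfolding prime_graph_def
  proof (intro conjI allI impI)
    show "3 \<le> card S" using c .
    fix M assume M: "is_module S E M"
    show "trivial_module S M"
    proof (rule ccontr)
      assume nt: "\<not> trivial_module S M"
      have MS: "M \<subseteq> S" using M unfolding is_module_def by auto
      have Mne: "M \<noteq> {}" "M \<noteq> S" using nt unfolding trivial_module_def by auto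
      have fM: "finite M" using finite_subset[OF subset_trans[OF MS S] fin] .
      have "card M \<noteq> 1" using nt unfolding trivial_module_def by auto
      moreover have "card M \<noteq> 0" using Mne fM by simp
      ultimately have "card M \<ge> 2" by linarith
      then obtain a b where ab: "a \<in> M" "b \<in> M" "a \<noteq> b"
        using card_le_Suc0_iff_eq[OF fM] by (metis One_nat_def not_less_eq_eq numeral_2_eq_2)
      show False
      proof (cases "(M \<subseteq> X) \<or> (M \<subseteq> Y)")
        case True
        have "dist E S a b" using tc ab MS unfolding twinfree_def by blast
        then obtain w where w: "w \<in> S - {a,b}" "E w a \<noteq> E w b" unfolding dist_def by blast
        show False
        proof (cases "w \<in> M")
          case True
          then have "\<not> E w a" "\<not> E w b" using `M \<subseteq> X \<or> M \<subseteq> Y` ab sameX sameY by blast+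
          then show ?thesis using w by simp
        next
          case False
          then have "w \<in> S - M" using w by auto
          then have "(\<forall>m\<in>M. E w m) \<or> (\<forall>m\<in>M. \<not> E w m)" using M unfolding is_module_def by blast
          then show ?thesis using ab w by blast
        qed
      next
        case False
        then obtain x y where xy: "x \<in> M" "y \<in> M" "x \<notin> Y" "y \<notin> X" by blast
        have xy2: "x \<in> X" "y \<in> Y" using xy MS S XY by auto
        have cl: "\<And>m w. m \<in> M \<Longrightarrow> w \<in> S - M \<Longrightarrow> \<not> E w m"
        proof -
          fix m w assume mw: "m \<in> M" "w \<in> S - M"
          have wV: "w \<in> V" using mw S by auto
          have "w \<in> X \<or> w \<in> Y" using wV XY by auto
          then have "\<not> E w x \<or> \<not> E w y" using sameX sameY xy2 by blast
          moreover have "(\<forall>m\<in>M. E w m) \<or> (\<forall>m\<in>M. \<not> E w m)" using M mw unfolding is_module_def by blast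
          ultimately show "\<not> E w m" using mw xy by blast
        qed
        have "\<exists>a\<in>M. \<exists>b\<in>S - M. E a b" using tc MS Mne unfolding conn_def by (simp add: Mne(2))
        then obtain a b where ab: "a \<in> M" "b \<in> S - M" "E a b" by blast
        moreover have "a \<in> V" "b \<in> V" using ab MS S by auto
        ultimately have "E b a" using sym by blast
        then show False using cl ab by blast
      qed
    qed
  qed
qed

end


context bip
begin

lemma conn_ext:
  assumes S: "S \<subseteq> V" and c: "conn E S" and u: "u \<in> V" and s: "s \<in> S" and us: "E u s"
  shows "conn E (insert u S)"
  unfolding conn_def
proof (intro allI impI)
  fix A assume A: "A \<subseteq> insert u S" "A \<noteq> {}" "A \<noteq> insert u S"
  show "\<exists>a\<in>A. \<exists>b\<in>insert u S - A. E a b"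
  proof (cases "u \<in> S")
    case True
    then have "insert u S = S" by auto
    then show ?thesis using c A unfolding conn_def by simp
  next
    case uS: False
    show ?thesis
    proof (cases "A \<inter> S = {}")
      case True
      then have "A = {u}" using A by auto
      then show ?thesis using s us uS by auto
    next
      case False
      show ?thesis
      proof (cases "S \<subseteq> A")
        case True
        then have "u \<notin> A" using A by auto
        moreover have "E s u" using sym[OF u _ us] s S by auto
        ultimately show ?thesis using True s by auto
      next
        case nS: False
        have "A \<inter> S \<subseteq> S" "A \<inter> S \<noteq> {}" "A \<inter> S \<noteq> S" using False nS by auto
        then have "\<exists>a\<in>A \<inter> S. \<exists>b\<in>S - A \<inter> S. E a b" using c unfolding conn_def by simp
        then show ?thesis by auto
      qed
    qed
  qed
qed

definition nonT :: "'a set \<Rightarrow> 'a \<Rightarrow> bool" where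
  "nonT S u \<longleftrightarrow> (\<forall>s\<in>S. \<exists>w\<in>S - {s}. E w u \<noteq> E w s)"

lemma dist_nonT: assumes "nonT S u" "s \<in> S" "u \<notin> S" "S \<subseteq> T" shows "dist E T u s"
proof -
  obtain w where "w \<in> S - {s}" "E w u \<noteq> E w s" using assms(1,2) unfolding nonT_def by blast
  then show ?thesis unfolding dist_def using assms(3,4) by (intro bexI[of _ w]) auto
qed

lemma twinfree_sub: "twinfree E S \<Longrightarrow> a \<in> S \<Longrightarrow> b \<in> S \<Longrightarrow> a \<noteq> b \<Longrightarrow> S \<subseteq> T \<Longrightarrow> dist E T a b"
  unfolding twinfree_def using dist_mono[of E S a b T] by blast

lemma twinfree_intro:
  assumes "\<And>a b. a \<in> T \<Longrightarrow> b \<in> T \<Longrightarrow> a \<noteq> b \<Longrightarrow> a \<notin> S \<Longrightarrow> dist E T a b"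
    and "twinfree E S" and "S \<subseteq> T"
  shows "twinfree E T"
  unfolding twinfree_def
proof (intro ballI impI)
  fix a b assume ab: "a \<in> T" "b \<in> T" "a \<noteq> b"
  show "dist E T a b"
  proof (cases "a \<in> S")
    case aS: True
    show ?thesis
    proof (cases "b \<in> S")
      case True
      then show ?thesis using twinfree_sub assms aS ab by blast
    next
      case False
      then show ?thesis using assms(1)[of b a] ab dist_sym by metis
    qed
  next
    case False
    then show ?thesis using assms(1) ab by blast
  qed
qed

end


context bip
begin

lemma Es: "a \<in> V \<Longrightarrow> b \<in> V \<Longrightarrow> E a b = E b a"
  using sym by blast

lemma nbr:
  assumes "S \<subseteq> V" "conn E S" "s \<in> S" "card S \<ge> 2"
  shows "\<exists>t\<in>S. t \<noteq> s \<and> E s t"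
proof -
  have "{s} \<noteq> S" using assms(4) by auto
  have h: "\<forall>A. A \<subseteq> S \<longrightarrow> A \<noteq> {} \<longrightarrow> A \<noteq> S \<longrightarrow> (\<exists>a\<in>A. \<exists>b\<in>S - A. E a b)"
    using assms(2) unfolding conn_def .
  have "\<exists>a\<in>{s}. \<exists>b\<in>S - {s}. E a b" using h[rule_format, of "{s}"] assms(3) `{s} \<noteq> S` by blast
  then show ?thesis by auto
qed

lemma C2:
  assumes W: "W \<subseteq> V" and S: "S \<subseteq> W" "twinfree E S"
    and u: "u \<in> W - S" "nonT S u" and z: "z \<in> W - S" "nonT S z" and uz: "u \<noteq> z"
    and w: "w \<in> S" "E w u \<noteq> E w z"
  shows "twinfree E (insert u (insert z S))"
proof (rule twinfree_intro[OF _ S(2)])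
  show "S \<subseteq> insert u (insert z S)" by auto
  fix a b assume ab: "a \<in> insert u (insert z S)" "b \<in> insert u (insert z S)" "a \<noteq> b" "a \<notin> S"
  have duz: "dist E (insert u (insert z S)) u z"
    unfolding dist_def using w u z by (intro bexI[of _ w]) auto
  show "dist E (insert u (insert z S)) a b"
  proof (cases "a = u")
    case True
    show ?thesis
    proof (cases "b = z")
      case True then show ?thesis using duz `a = u` by simp
    next
      case False then have "b \<in> S" using ab `a = u` by auto
      have "dist E (insert u (insert z S)) u b" by (rule dist_nonT[OF u(2) `b \<in> S`]) (use u in auto)
      then show ?thesis using `a = u` by simp
    qed
  next
    case False
    then have az: "a = z" using ab by auto
    show ?thesis
    proof (cases "b = u")
      case True then show ?thesis using duz az dist_sym by metis
    next
      case False then have "b \<in> S" using ab az by auto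
      have "dist E (insert u (insert z S)) z b" by (rule dist_nonT[OF z(2) `b \<in> S`]) (use z in auto)
      then show ?thesis using az by simp
    qed
  qed
qed

lemma pair_tc:
  assumes W: "W \<subseteq> V" "twinfree E W" "conn E W"
    and S: "S \<subseteq> W" "twinfree E S" "conn E S" "card S \<ge> 3"
    and R: "card (W - S) \<ge> 2"
  shows "\<exists>x y. x \<in> W - S \<and> y \<in> W - S \<and> x \<noteq> y \<and>
           twinfree E (insert x (insert y S)) \<and> conn E (insert x (insert y S))"
proof -
  have SV: "S \<subseteq> V" using S W by auto
  have fW: "finite W" using finite_subset[OF W(1) fin] .
  show ?thesis
  proof (cases "\<exists>u\<in>W - S. \<exists>s\<in>S. \<forall>w\<in>S - {s}. E w u = E w s")
    case True
    then obtain u s where u: "u \<in> W - S" and s: "s \<in> S" and us: "\<forall>w\<in>S - {s}. E w u = E w s" by blast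
    have uV: "u \<in> V" "s \<in> V" using u s W SV by auto
    obtain t where t: "t \<in> S" "t \<noteq> s" "E s t" using nbr[OF SV S(3) s] S(4) by auto
    have tV: "t \<in> V" using t SV by auto
    have ts: "E t s" using t tV uV Es by blast
    have tu: "E t u" using us t ts by auto
    have ut: "E u t" using tu tV uV Es by blast
    have nus: "\<not> E u s" using notri[OF uV(1) tV uV(2) ut ts] .
    have "u \<noteq> s" using u s by auto
    then have "dist E W u s" using W(2) u s S(1) unfolding twinfree_def by auto
    then obtain w where w: "w \<in> W - {u, s}" "E w u \<noteq> E w s" unfolding dist_def by blast
    have wS: "w \<notin> S" using w us by auto
    have wV: "w \<in> V" using w W by auto
    have wu: "w \<noteq> u" using w by auto
    define T where "T = insert u (insert w S)"
    have c1: "conn E (insert u S)" using conn_ext[OF SV S(3) uV(1) t(1) ut] .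
    have c2: "conn E (insert w (insert u S))"
    proof (cases "E w u")
      case True
      then show ?thesis using conn_ext[OF _ c1 wV _ True] SV uV by auto
    next
      case False
      then have "E w s" using w by auto
      then show ?thesis using conn_ext[OF _ c1 wV _ `E w s`] SV uV s by auto
    qed
    have cT: "conn E T" using c2 unfolding T_def by (simp add: insert_commute)
    have d_uw: "dist E T u w"
    proof (cases "E t w")
      case False
      then show ?thesis unfolding dist_def T_def using tu t wS u by (intro bexI[of _ t]) auto
    next
      case True
      have "\<not> E w u"
      proof
        assume "E w u"
        then have "E u w" using Es uV wV by blast
        then show False using notri[OF tV uV(1) wV tu] True by blast
      qed
      then have "E w s" using w by auto
      then have "E s w" using Es uV wV by blast
      moreover have "\<not> E s u" using nus Es uV by blast
      ultimately show ?thesis unfolding dist_def T_def using s wu u wS by (intro bexI[of _ s]) auto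
    qed
    have d_ub: "dist E T u b" if b: "b \<in> S" for b
    proof (cases "b = s")
      case True
      then show ?thesis unfolding dist_def T_def using w wS by (intro bexI[of _ w]) auto
    next
      case False
      then have "dist E S s b" using S(2) s b unfolding twinfree_def by auto
      then obtain z where z: "z \<in> S - {s, b}" "E z s \<noteq> E z b" unfolding dist_def by blast
      have "E z u = E z s" using us z by auto
      then show ?thesis unfolding dist_def T_def using z u by (intro bexI[of _ z]) auto
    qed
    have d_wb: "dist E T w b" if b: "b \<in> S" for b
    proof -
      have bV: "b \<in> V" using b SV by auto
      show ?thesis
      proof (cases "b = s")
        case True
        show ?thesis
        proof (cases "E u w")
          case True
          then show ?thesis unfolding dist_def T_def using nus `b = s` wu u b
            by (intro bexI[of _ u]) auto
        next
          case False
          then have "\<not> E w u" using Es uV wV by blast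
          then have "E w s" using w by auto
          have "\<not> E t w"
          proof
            assume "E t w"
            then show False using notri[OF tV wV uV(2) `E t w` `E w s`] ts by blast
          qed
          then show ?thesis unfolding dist_def T_def using ts `b = s` t wS
            by (intro bexI[of _ t]) auto
        qed
      next
        case False
        have e1: "E u w \<noteq> E s w" using w Es uV wV by metis
        have "E b u = E b s" using us b False by auto
        then have e2: "E u b = E s b" using Es[OF uV(1) bV] Es[OF uV(2) bV] by simp
        show ?thesis
        proof (cases "E u w = E u b")
          case False
          then show ?thesis unfolding dist_def T_def using wu u b by (intro bexI[of _ u]) auto
        next
          case True
          then show ?thesis unfolding dist_def T_def using e1 e2 s False w
            by (intro bexI[of _ s]) auto
        qed
      qed
    qed
    have tT: "twinfree E T"
    proof (rule twinfree_intro[OF _ S(2)])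
      show "S \<subseteq> T" unfolding T_def by auto
      fix a b assume ab: "a \<in> T" "b \<in> T" "a \<noteq> b" "a \<notin> S"
      then have "a = u \<or> a = w" unfolding T_def by auto
      then show "dist E T a b"
      proof
        assume "a = u"
        then have "b = w \<or> b \<in> S" using ab unfolding T_def by auto
        then show ?thesis using d_uw d_ub `a = u` by auto
      next
        assume "a = w"
        then have "b = u \<or> b \<in> S" using ab unfolding T_def by auto
        then show ?thesis using d_uw d_wb `a = w` dist_sym by metis
      qed
    qed
    show ?thesis using tT cT u w wS wu unfolding T_def by blast
  next
    case False
    then have nT: "\<And>u. u \<in> W - S \<Longrightarrow> nonT S u" unfolding nonT_def by blast
    have "S \<noteq> {}" using S(4) by auto
    moreover have "S \<noteq> W" using R by auto
    ultimately have "\<exists>a\<in>S. \<exists>b\<in>W - S. E a b" using W(3) S(1) unfolding conn_def by blast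
    then obtain t0 u where t0: "t0 \<in> S" and u: "u \<in> W - S" and tu: "E t0 u" by blast
    have uV: "u \<in> V" and t0V: "t0 \<in> V" using u t0 W SV by auto
    have ut: "E u t0" using tu Es uV t0V by blast
    have c1: "conn E (insert u S)" using conn_ext[OF SV S(3) uV t0 ut] .
    have "insert u S \<noteq> W"
    proof
      assume "insert u S = W"
      then have "W - S = {u}" using u by auto
      then show False using R by simp
    qed
    moreover have "insert u S \<subseteq> W" "insert u S \<noteq> {}" using u S by auto
    ultimately have "\<exists>a\<in>insert u S. \<exists>b\<in>W - insert u S. E a b" using W(3) unfolding conn_def by blast
    then obtain a y where a: "a \<in> insert u S" and y: "y \<in> W - insert u S" and ay: "E a y" by blast
    have yV: "y \<in> V" and aV: "a \<in> V" using y a W SV uV by auto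
    have ya: "E y a" using ay Es yV aV by blast
    have c2: "conn E (insert y (insert u S))" using conn_ext[OF _ c1 yV a ya] SV uV by auto
    have yR: "y \<in> W - S" "y \<noteq> u" using y by auto
    show ?thesis
    proof (cases "\<exists>w\<in>S. E w u \<noteq> E w y")
      case True
      then obtain w where "w \<in> S" "E w u \<noteq> E w y" by blast
      then have "twinfree E (insert u (insert y S))"
        using C2[OF W(1) S(1,2) u nT[OF u] yR(1) nT[OF yR(1)]] yR by auto
      moreover have "conn E (insert u (insert y S))" using c2 by (simp add: insert_commute)
      ultimately show ?thesis using u yR by blast
    next
      case False
      then have eq: "\<forall>w\<in>S. E w u = E w y" by blast
      have ty: "E t0 y" using eq t0 tu by auto
      have "dist E W u y" using W(2) u yR unfolding twinfree_def by auto
      then obtain z where z: "z \<in> W - {u, y}" "E z u \<noteq> E z y" unfolding dist_def by blast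
      have zS: "z \<notin> S" using z eq by auto
      have zV: "z \<in> V" using z W by auto
      have zR: "z \<in> W - S" using z zS by auto
      show ?thesis
      proof (cases "E z u")
        case True
        have "conn E (insert z (insert u S))" using conn_ext[OF _ c1 zV _ True] SV uV by auto
        then have cc: "conn E (insert u (insert z S))" by (simp add: insert_commute)
        have "E u z" using True Es uV zV by blast
        then have "\<not> E t0 z" using notri[OF t0V uV zV tu] by blast
        then have "twinfree E (insert u (insert z S))"
          using C2[OF W(1) S(1,2) u nT[OF u] zR nT[OF zR]] z tu t0 by auto
        then show ?thesis using cc u zR z by blast
      next
        case False
        then have zy: "E z y" using z by auto
        have yt: "E y t0" using ty Es yV t0V by blast
        have c3: "conn E (insert y S)" using conn_ext[OF SV S(3) yV t0 yt] .
        have "conn E (insert z (insert y S))" using conn_ext[OF _ c3 zV _ zy] SV yV by auto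
        then have cc: "conn E (insert y (insert z S))" by (simp add: insert_commute)
        have "E y z" using zy Es yV zV by blast
        then have "\<not> E t0 z" using notri[OF t0V yV zV ty] by blast
        then have "twinfree E (insert y (insert z S))"
          using C2[OF W(1) S(1,2) yR(1) nT[OF yR(1)] zR nT[OF zR]] z ty t0 by auto
        then show ?thesis using cc yR z zR by blast
      qed
    qed
  qed
qed

end


lemma idx0: "\<forall>i\<in>{0..<5::nat}. \<forall>j\<in>{0..<5}. i \<noteq> j \<longrightarrow> (\<exists>k\<in>{0..<5}. k \<noteq> i \<and> k \<noteq> j \<and> P5_E k i \<noteq> P5_E k j)"
proof -
  have e: "{0..<5::nat} = {0,1,2,3,4}" by auto
  show ?thesis unfolding e by (simp add: P5_E_def)
qed

lemma idx1: "\<forall>i\<in>{1..<5::nat}. \<forall>j\<in>{1..<5}. i \<noteq> j \<longrightarrow> (\<exists>k\<in>{1..<5}. k \<noteq> i \<and> k \<noteq> j \<and> P5_E k i \<noteq> P5_E k j)"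
proof -
  have e: "{1..<5::nat} = {1,2,3,4}" by auto
  show ?thesis unfolding e by (simp add: P5_E_def)
qed

context bip
begin

lemma card_ge3_sub: "S \<subseteq> T \<Longrightarrow> T \<subseteq> V \<Longrightarrow> card S \<ge> 3 \<Longrightarrow> card T \<ge> 3"
  using card_mono[OF finite_subset[OF _ fin]] by (meson le_trans)

lemma pair_prime:
  assumes W: "W \<subseteq> V" "prime_graph W E" and S: "S \<subseteq> W" "prime_graph S E"
    and R: "card (W - S) \<ge> 2"
  shows "\<exists>x y. x \<in> W - S \<and> y \<in> W - S \<and> x \<noteq> y \<and> prime_graph (insert x (insert y S)) E"
proof -
  have cW: "card W \<ge> 3" and cS: "card S \<ge> 3" using W S unfolding prime_graph_def by auto
  have SV: "S \<subseteq> V" using S W by auto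
  have tW: "twinfree E W" "conn E W" using PC[OF W(1) cW] W(2) by auto
  have tS: "twinfree E S" "conn E S" using PC[OF SV cS] S(2) by auto
  obtain x y where xy: "x \<in> W - S" "y \<in> W - S" "x \<noteq> y"
     "twinfree E (insert x (insert y S))" "conn E (insert x (insert y S))"
    using pair_tc[OF W(1) tW S(1) tS cS R] by blast
  have sub: "insert x (insert y S) \<subseteq> V" using xy SV W by auto
  have "card (insert x (insert y S)) \<ge> 3" using card_ge3_sub[OF _ sub cS] by auto
  then have "prime_graph (insert x (insert y S)) E" using PC[OF sub] xy by auto
  then show ?thesis using xy by blast
qed

lemma grow:
  assumes W: "W \<subseteq> V" "prime_graph W E"
  shows "T \<subseteq> W \<Longrightarrow> prime_graph T E \<Longrightarrow> T \<noteq> W \<Longrightarrow>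
    \<exists>T'. T \<subseteq> T' \<and> T' \<subseteq> W \<and> prime_graph T' E \<and> (card (W - T') = 1 \<or> card (W - T') = 2)"
proof (induction "card (W - T)" arbitrary: T rule: less_induct)
  case less
  have fW: "finite W" using finite_subset[OF W(1) fin] .
  have TW: "T \<subseteq> W" "prime_graph T E" "T \<noteq> W" using less.prems by auto
  have "W - T \<noteq> {}" using TW by auto
  then have c0: "card (W - T) \<noteq> 0" using fW by auto
  show ?case
  proof (cases "card (W - T) \<le> 2")
    case True
    then have "card (W - T) = 1 \<or> card (W - T) = 2" using c0 by auto
    then show ?thesis using TW by blast
  next
    case False
    then have c2: "card (W - T) \<ge> 2" by auto
    obtain x y where xy: "x \<in> W - T" "y \<in> W - T" "x \<noteq> y" "prime_graph (insert x (insert y T)) E"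
      using pair_prime[OF W TW(1) TW(2) c2] by blast
    define T1 where "T1 = insert x (insert y T)"
    have "W - T1 = (W - T) - {x, y}" unfolding T1_def by auto
    moreover have "{x,y} \<subseteq> W - T" using xy by auto
    ultimately have c: "card (W - T1) = card (W - T) - 2" using xy fW by (simp add: card_Diff_subset)
    have T1W: "T1 \<subseteq> W" using xy TW unfolding T1_def by auto
    have T1ne: "T1 \<noteq> W" using c False by auto
    have lt: "card (W - T1) < card (W - T)" using c False by auto
    have pT1: "prime_graph T1 E" using xy(4) unfolding T1_def .
    obtain T' where T': "T1 \<subseteq> T'" "T' \<subseteq> W" "prime_graph T' E" "card (W - T') = 1 \<or> card (W - T') = 2"
      using less.hyps[OF lt T1W pT1 T1ne] by blast
    have "T \<subseteq> T'" using T'(1) unfolding T1_def by auto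
    then show ?thesis using T' by blast
  qed
qed

lemma path_prime:
  assumes f: "inj_on f {0..<5}" "f ` {0..<5} \<subseteq> V" "\<forall>i\<in>{0..<5}. \<forall>j\<in>{0..<5}. P5_E i j = E (f i) (f j)"
  shows "prime_graph (f ` {0..<5}) E" "prime_graph (f ` {1..<5}) E"
proof -
  have Ef: "E (f i) (f j) = P5_E i j" if "i < 5" "j < 5" for i j using f(3) that by auto
  have tw: "twinfree E (f ` I)" if I: "I \<subseteq> {0..<5}"
     and h: "\<forall>i\<in>I. \<forall>j\<in>I. i \<noteq> j \<longrightarrow> (\<exists>k\<in>I. k \<noteq> i \<and> k \<noteq> j \<and> P5_E k i \<noteq> P5_E k j)" for I
    unfolding twinfree_def
  proof (intro ballI impI)
    fix a b assume ab: "a \<in> f ` I" "b \<in> f ` I" "a \<noteq> b"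
    then obtain i j where ij: "i \<in> I" "j \<in> I" "a = f i" "b = f j" by auto
    then have "i \<noteq> j" using ab by auto
    then obtain k where k: "k \<in> I" "k \<noteq> i" "k \<noteq> j" "P5_E k i \<noteq> P5_E k j" using h ij by blast
    have fk: "f k \<noteq> f i" "f k \<noteq> f j" using k ij I inj_onD[OF f(1)] by blast+
    have "k < 5" "i < 5" "j < 5" using I k ij by auto
    then have "E (f k) (f i) = P5_E k i" "E (f k) (f j) = P5_E k j" using Ef by auto
    moreover have "E (f k) a \<noteq> E (f k) b" using calculation k ij by auto
    ultimately show "dist E (f ` I) a b" unfolding dist_def using k ij fk by (intro bexI[of _ "f k"]) auto
  qed
  have fV: "f i \<in> V" if "i < 5" for i using f(2) that by auto
  have c1: "conn E {f 1}" by (rule conn_single)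
  have c2: "conn E {f 2, f 1}" using conn_ext[OF _ c1 fV[of 2], of "f 1"] fV Ef[of 2 1] by (simp add: P5_E_def)
  have c3: "conn E {f 3, f 2, f 1}" using conn_ext[OF _ c2 fV[of 3], of "f 2"] fV Ef[of 3 2] by (simp add: P5_E_def)
  have c4: "conn E {f 4, f 3, f 2, f 1}" using conn_ext[OF _ c3 fV[of 4], of "f 3"] fV Ef[of 4 3] by (simp add: P5_E_def)
  have c5: "conn E {f 0, f 4, f 3, f 2, f 1}" using conn_ext[OF _ c4 fV[of 0], of "f 1"] fV Ef[of 0 1] by (simp add: P5_E_def)
  have e0: "f ` {0..<5} = {f 0, f 4, f 3, f 2, f 1}"
  proof -
    have "{0..<5::nat} = {0,1,2,3,4}" by auto
    then show ?thesis by auto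
  qed
  have e1: "f ` {1..<5} = {f 4, f 3, f 2, f 1}"
  proof -
    have "{1..<5::nat} = {1,2,3,4}" by auto
    then show ?thesis by auto
  qed
  have card0: "card (f ` {0..<5}) = 5" using card_image[OF f(1)] by simp
  have card1: "card (f ` {1..<5}) = 4" using card_image[OF inj_on_subset[OF f(1)], of "{1..<5}"] by auto
  show "prime_graph (f ` {0..<5}) E"
    using PC[OF f(2)] card0 tw[OF _ idx0] c5 e0 by auto
  have s1: "f ` {1..<5} \<subseteq> V" using f(2) by auto
  show "prime_graph (f ` {1..<5}) E"
    using PC[OF s1] card1 tw[OF _ idx1] c4 e1 by auto
qed

lemma IND:
  assumes f: "inj_on f {0..<5}" "f ` {0..<5} \<subseteq> V" "\<forall>i\<in>{0..<5}. \<forall>j\<in>{0..<5}. P5_E i j = E (f i) (f j)"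
  shows "S \<subseteq> V \<Longrightarrow> prime_graph S E \<Longrightarrow> f ` {0..<5} \<subseteq> S \<Longrightarrow> \<exists>v\<in>S. prime_graph (S - {v}) E"
proof (induction "card S" arbitrary: S rule: less_induct)
  case less
  define P where "P = f ` {0..<5}"
  have fS: "finite S" using finite_subset[OF less.prems(1) fin] .
  have pp: "prime_graph P E" "prime_graph (f ` {1..<5}) E" using path_prime[OF f] unfolding P_def by auto
  show ?case
  proof (cases "S = P")
    case True
    have "S - {f 0} = f ` {1..<5}"
    proof -
      have "{0..<5::nat} = insert 0 {1..<5}" by auto
      then have "P = insert (f 0) (f ` {1..<5})" unfolding P_def by auto
      moreover have "f 0 \<notin> f ` {1..<5}"
      proof
        assume "f 0 \<in> f ` {1..<5}"
        then obtain x where x: "x \<in> {1..<5}" "f 0 = f x" by auto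
        then have "0 = x" using inj_onD[OF f(1)] by auto
        then show False using x by auto
      qed
      ultimately show ?thesis using True by auto
    qed
    moreover have "f 0 \<in> S" using True unfolding P_def by auto
    ultimately show ?thesis using pp(2) by (intro bexI[of _ "f 0"]) simp_all
  next
    case False
    then have "S \<noteq> P" .
    have PS: "P \<subseteq> S" using less.prems unfolding P_def by auto
    obtain T' where T': "P \<subseteq> T'" "T' \<subseteq> S" "prime_graph T' E" "card (S - T') = 1 \<or> card (S - T') = 2"
      using grow[OF less.prems(1,2) PS pp(1) `S \<noteq> P`[symmetric]] by blast
    show ?thesis
    proof (cases "card (S - T') = 1")
      case True
      then obtain v where v: "S - T' = {v}" using card_1_singletonE by blast
      then have "T' = S - {v}" "v \<in> S" using T'(2) by auto
      then show ?thesis using T'(3) by auto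
    next
      case False
      then have "card (S - T') = 2" using T' by auto
      then obtain x y where xy: "S - T' = {x, y}" "x \<noteq> y" by (meson card_2_iff)
      have "T' \<noteq> S" using xy by auto
      then have "card T' < card S" using T'(2) fS by (meson psubsetI psubset_card_mono)
      moreover have "T' \<subseteq> V" using T' less.prems by auto
      moreover have "f ` {0..<5} \<subseteq> T'" using T'(1) unfolding P_def .
      ultimately obtain z where z: "z \<in> T'" "prime_graph (T' - {z}) E"
        using less.hyps[OF _ _ T'(3)] by blast
      show ?thesis
      proof (cases "prime_graph (S - {x}) E \<or> prime_graph (S - {y}) E")
        case True
        then show ?thesis using xy by auto
      next
        case nxy: False
        have xyS: "x \<in> S" "y \<in> S" "x \<notin> T'" "y \<notin> T'" using xy by auto
        have SR: "S - (T' - {z}) = {x, y, z}" using xy z T'(2) by auto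
        have "z \<noteq> x" "z \<noteq> y" using z xyS by auto
        then have "card (S - (T' - {z})) = 3" using SR xy by auto
        then have c2: "card (S - (T' - {z})) \<ge> 2" by simp
        have sub: "T' - {z} \<subseteq> S" using T'(2) by auto
        obtain a b where ab: "a \<in> S - (T' - {z})" "b \<in> S - (T' - {z})" "a \<noteq> b"
            "prime_graph (insert a (insert b (T' - {z}))) E"
          using pair_prime[OF less.prems(1,2) sub z(2) c2] by blast
        have ab2: "a \<in> {x,y,z}" "b \<in> {x,y,z}" using ab(1,2) SR by auto
        have eS: "S = insert x (insert y T')" using xy T'(2) by auto
        have ins: "insert a (insert b (T' - {z})) = {a, b} \<union> (T' - {z})" by auto
        have e1: "{x, y} \<union> (T' - {z}) = S - {z}" using eS xyS z by auto
        have e2: "{x, z} \<union> (T' - {z}) = S - {y}" using eS xyS z `x \<noteq> y` by auto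
        have e3: "{y, z} \<union> (T' - {z}) = S - {x}" using eS xyS z `x \<noteq> y` by auto
        have pab: "prime_graph ({a, b} \<union> (T' - {z})) E" using ab(4) unfolding ins .
        have "{a, b} = {x, y} \<or> {a, b} = {x, z} \<or> {a, b} = {y, z}"
          using ab2 ab(3) by (auto simp: insert_commute)
        then have "prime_graph (S - {z}) E"
        proof (elim disjE)
          assume "{a, b} = {x, y}" then show ?thesis using pab e1 by simp
        next
          assume "{a, b} = {x, z}" then have "prime_graph (S - {y}) E" using pab e2 by simp
          then show ?thesis using nxy by simp
        next
          assume "{a, b} = {y, z}" then have "prime_graph (S - {x}) E" using pab e3 by simp
          then show ?thesis using nxy by simp
        qed
        then show ?thesis using z T'(2) by auto
      qed
    qed
  qed
qed

lemma critical_noP5: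
  assumes "critical V E" shows "\<not> induced_le P5_V P5_E V E"
proof
  assume "induced_le P5_V P5_E V E"
  then obtain f where f: "inj_on f {0..<5}" "f ` {0..<5} \<subseteq> V" "\<forall>i\<in>{0..<5}. \<forall>j\<in>{0..<5}. P5_E i j = E (f i) (f j)"
    unfolding induced_le_def P5_V_def by (elim exE conjE) blast
  have "prime_graph V E" using assms unfolding critical_def by auto
  then obtain v where "v \<in> V" "prime_graph (V - {v}) E" using IND[OF f, of V] f by auto
  then show False using assms unfolding critical_def by auto
qed

end


context bip
begin

lemma mkP5:
  assumes V: "v0 \<in> V" "v1 \<in> V" "v2 \<in> V" "v3 \<in> V" "v4 \<in> V"
    and d: "distinct [v0, v1, v2, v3, v4]"
    and e: "E v0 v1" "E v1 v2" "E v2 v3" "E v3 v4"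
    and n: "\<not> E v0 v2" "\<not> E v0 v3" "\<not> E v0 v4" "\<not> E v1 v3" "\<not> E v1 v4" "\<not> E v2 v4"
  shows "induced_le P5_V P5_E V E"
proof -
  define xs where "xs = [v0, v1, v2, v3, v4]"
  have e': "E v1 v0" "E v2 v1" "E v3 v2" "E v4 v3" using e V Es by blast+
  have n': "\<not> E v2 v0" "\<not> E v3 v0" "\<not> E v4 v0" "\<not> E v3 v1" "\<not> E v4 v1" "\<not> E v4 v2"
    using n V Es by blast+
  have irr': "\<not> E v0 v0" "\<not> E v1 v1" "\<not> E v2 v2" "\<not> E v3 v3" "\<not> E v4 v4" using irr V by auto
  have P: "P5_V = {0,1,2,3,4}" unfolding P5_V_def by auto
  have inj: "inj_on (nth xs) P5_V" unfolding xs_def using d by (intro inj_on_nth) (auto simp: P)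
  have sub: "nth xs ` P5_V \<subseteq> V" unfolding P xs_def using V by auto
  have adj: "\<forall>x\<in>P5_V. \<forall>y\<in>P5_V. P5_E x y \<longleftrightarrow> E (xs ! x) (xs ! y)"
    unfolding P xs_def using e e' n n' irr' by (simp add: P5_E_def)
  show ?thesis unfolding induced_le_def using inj sub adj by blast
qed

definition Nb :: "'a \<Rightarrow> 'a set" where "Nb x = {y \<in> V. E x y}"

lemma Nb_sub: "Nb x \<subseteq> V" unfolding Nb_def by auto
lemma Nb_fin: "finite (Nb x)" using finite_subset[OF Nb_sub fin] .

lemma XV: "X \<subseteq> V" "Y \<subseteq> V" using XY by auto

lemma NbX: "x \<in> X \<Longrightarrow> Nb x \<subseteq> Y"
  unfolding Nb_def using side XV by blast

lemma NbY: "y \<in> Y \<Longrightarrow> Nb y \<subseteq> X"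
  unfolding Nb_def using side XV XY by blast

end

locale bipP = bip +
  assumes pr: "prime_graph V E" and noP5: "\<not> induced_le P5_V P5_E V E" and c4: "card V \<ge> 4"
begin

lemma c3: "card V \<ge> 3" using c4 by simp
lemma tw: "twinfree E V" and cn: "conn E V" using PC[OF order_refl c3] pr by auto

lemma injNb: "p \<in> V \<Longrightarrow> q \<in> V \<Longrightarrow> Nb p = Nb q \<Longrightarrow> p = q"
proof (rule ccontr)
  assume pq: "p \<in> V" "q \<in> V" "Nb p = Nb q" "p \<noteq> q"
  then have "dist E V p q" using tw unfolding twinfree_def by auto
  then obtain w where w: "w \<in> V - {p,q}" "E w p \<noteq> E w q" unfolding dist_def by blast
  then have "E p w \<noteq> E q w" using Es pq by auto
  then have "(w \<in> Nb p) \<noteq> (w \<in> Nb q)" unfolding Nb_def using w by auto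
  then show False using pq by auto
qed

lemma noiso: "v \<in> V \<Longrightarrow> \<exists>w\<in>V. E v w"
proof -
  assume v: "v \<in> V"
  have "{v} \<noteq> V" using c4 by auto
  have h: "\<forall>A. A \<subseteq> V \<longrightarrow> A \<noteq> {} \<longrightarrow> A \<noteq> V \<longrightarrow> (\<exists>a\<in>A. \<exists>b\<in>V - A. E a b)"
    using cn unfolding conn_def .
  have "\<exists>a\<in>{v}. \<exists>b\<in>V - {v}. E a b" using h[rule_format, of "{v}"] v `{v} \<noteq> V` by blast
  then show ?thesis by auto
qed

lemma L1:
  assumes p: "p \<in> X" and q: "q \<in> X" and c: "c \<in> V" "E p c" "E q c"
  shows "Nb p \<subseteq> Nb q \<or> Nb q \<subseteq> Nb p"
proof (rule ccontr)
  assume "\<not> ?thesis"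
  then obtain yp yq where yp: "yp \<in> Nb p" "yp \<notin> Nb q" and yq: "yq \<in> Nb q" "yq \<notin> Nb p" by blast
  have ypY: "yp \<in> Y" "yq \<in> Y" "c \<in> Y" using yp yq NbX p q c unfolding Nb_def by auto
  have V: "p \<in> V" "q \<in> V" "yp \<in> V" "yq \<in> V" using p q ypY XV by auto
  have E1: "E p yp" "E q yq" "\<not> E q yp" "\<not> E p yq" using yp yq V unfolding Nb_def by auto
  have "p \<noteq> q" using yp yq by auto
  moreover have "yp \<noteq> c" "c \<noteq> yq" "yp \<noteq> yq" using E1 c by auto
  moreover have "p \<notin> Y" "q \<notin> Y" using p q XY by auto
  ultimately have d: "distinct [yp, p, c, q, yq]" using ypY by auto
  have "E yp p" "E c q" using E1 c V Es by auto
  moreover have "\<not> E yp c" "\<not> E yp yq" "\<not> E c yq" using sameY ypY by auto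
  moreover have "\<not> E yp q" using E1 V Es by auto
  moreover have "\<not> E p q" using sameX p q by auto
  ultimately have "induced_le P5_V P5_E V E"
    using mkP5[OF V(3) V(1) c(1) V(2) V(4) d] E1 c by auto
  then show False using noP5 by auto
qed

lemma chain:
  assumes p: "p \<in> X" and q: "q \<in> X"
  shows "Nb p \<subseteq> Nb q \<or> Nb q \<subseteq> Nb p"
proof -
  have Xne: "X \<noteq> {}" using p by auto
  have fX: "finite X" using finite_subset[OF XV(1) fin] .
  obtain a where a: "a \<in> X" "\<forall>x\<in>X. card (Nb x) \<le> card (Nb a)"
  proof -
    have fin1: "finite ((\<lambda>x. card (Nb x)) ` X)" using fX by auto
    have "Max ((\<lambda>x. card (Nb x)) ` X) \<in> (\<lambda>x. card (Nb x)) ` X" using fin1 Xne by (intro Max_in) auto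
    then obtain a where "a \<in> X" "card (Nb a) = Max ((\<lambda>x. card (Nb x)) ` X)" by auto
    moreover have "\<forall>x\<in>X. card (Nb x) \<le> Max ((\<lambda>x. card (Nb x)) ` X)"
      using fin1 by auto
    ultimately show ?thesis using that by auto
  qed
  have sub_a: "Nb x \<subseteq> Nb a" if x: "x \<in> X" "Nb x \<inter> Nb a \<noteq> {}" for x
  proof -
    obtain c where c: "c \<in> Nb x" "c \<in> Nb a" using x by auto
    then have "c \<in> V" "E x c" "E a c" unfolding Nb_def by auto
    then have "Nb x \<subseteq> Nb a \<or> Nb a \<subseteq> Nb x" using L1[OF x(1) a(1)] by auto
    moreover have "Nb a \<subseteq> Nb x \<Longrightarrow> Nb a = Nb x"
      using card_seteq[OF Nb_fin] a(2) x(1) by metis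
    ultimately show ?thesis by auto
  qed
  define M where "M = insert a (Nb a \<union> {x\<in>X. Nb x \<inter> Nb a \<noteq> {}})"
  have MV: "M \<subseteq> V" unfolding M_def using a XV Nb_sub by auto
  have closed: "\<not> E m w" if m: "m \<in> M" and w: "w \<in> V - M" for m w
  proof
    assume Emw: "E m w"
    have mV: "m \<in> V" using m MV by auto
    have "m = a \<or> m \<in> Nb a \<or> (m \<in> X \<and> Nb m \<inter> Nb a \<noteq> {})" using m unfolding M_def by auto
    then show False
    proof (elim disjE)
      assume "m = a" then have "w \<in> Nb a" using Emw w unfolding Nb_def by auto
      then show False using w unfolding M_def by auto
    next
      assume ma: "m \<in> Nb a"
      then have "m \<in> Y" using NbX a by auto
      then have "w \<in> X" using side[OF mV _ Emw] w XY by auto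
      moreover have "m \<in> Nb w" using Emw Es mV w unfolding Nb_def by auto
      ultimately show False using w ma unfolding M_def by auto
    next
      assume "m \<in> X \<and> Nb m \<inter> Nb a \<noteq> {}"
      then have "Nb m \<subseteq> Nb a" using sub_a by auto
      moreover have "w \<in> Nb m" using Emw w unfolding Nb_def by auto
      ultimately show False using w unfolding M_def by auto
    qed
  qed
  have "M = V"
  proof (rule ccontr)
    assume "M \<noteq> V"
    moreover have "M \<noteq> {}" unfolding M_def by auto
    moreover have h: "\<forall>A. A \<subseteq> V \<longrightarrow> A \<noteq> {} \<longrightarrow> A \<noteq> V \<longrightarrow> (\<exists>a\<in>A. \<exists>b\<in>V - A. E a b)"
      using cn unfolding conn_def .
    ultimately obtain m w where "m \<in> M" "w \<in> V - M" "E m w" using MV by blast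
    then show False using closed by blast
  qed
  have dom: "Y \<subseteq> Nb a"
  proof
    fix y assume y: "y \<in> Y"
    then have "y \<in> M" using `M = V` XV by auto
    moreover have "y \<noteq> a" using y a XY by auto
    moreover have "y \<notin> X" using y XY by auto
    ultimately show "y \<in> Nb a" unfolding M_def by auto
  qed
  show ?thesis
  proof (rule ccontr)
    assume "\<not> ?thesis"
    then obtain yp yq where yp: "yp \<in> Nb p" "yp \<notin> Nb q" and yq: "yq \<in> Nb q" "yq \<notin> Nb p" by blast
    have ypY: "yp \<in> Y" "yq \<in> Y" using yp yq NbX p q by auto
    have V: "p \<in> V" "q \<in> V" "yp \<in> V" "yq \<in> V" "a \<in> V" using p q ypY XV a by auto
    have E1: "E p yp" "E q yq" "\<not> E q yp" "\<not> E p yq" using yp yq V unfolding Nb_def by auto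
    have E2: "E a yp" "E a yq" using dom ypY unfolding Nb_def by auto
    have "p \<noteq> q" "a \<noteq> p" "a \<noteq> q" "yp \<noteq> yq" using E1 E2 by auto
    moreover have "p \<notin> Y" "q \<notin> Y" "a \<notin> Y" using p q a XY by auto
    ultimately have d: "distinct [p, yp, a, yq, q]" using ypY by auto
    have "E yp a" "E yq q" using E1 E2 V Es by auto
    moreover have "\<not> E p a" "\<not> E p q" "\<not> E a q" using sameX p q a by auto
    moreover have "\<not> E yp yq" using sameY ypY by auto
    moreover have "\<not> E yp q" using E1 V Es by auto
    ultimately have "induced_le P5_V P5_E V E"
      using mkP5[OF V(1) V(3) V(5) V(4) V(2) d] E1 E2 by auto
    then show False using noP5 by auto
  qed
qed

end


context bipP
begin

definition U :: "'a \<Rightarrow> 'a set" where "U x' = {x \<in> X. Nb x' \<subseteq> Nb x}"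

lemma exY:
  assumes x': "x' \<in> X"
  shows "\<exists>y\<in>Y. Nb y = U x'"
proof -
  define Sm where "Sm = {x \<in> X. Nb x \<subset> Nb x'}"
  have fX: "finite X" using finite_subset[OF XV(1) fin] .
  have "\<exists>y. y \<in> Nb x' \<and> (\<forall>x\<in>Sm. y \<notin> Nb x)"
  proof (cases "Sm = {}")
    case True
    obtain w where "w \<in> V" "E x' w" using noiso x' XV by blast
    then show ?thesis using True unfolding Nb_def by auto
  next
    case False
    have fin1: "finite ((\<lambda>x. card (Nb x)) ` Sm)" using fX unfolding Sm_def by auto
    have "Max ((\<lambda>x. card (Nb x)) ` Sm) \<in> (\<lambda>x. card (Nb x)) ` Sm" using fin1 False by (intro Max_in) auto
    then obtain x0 where x0: "x0 \<in> Sm" "card (Nb x0) = Max ((\<lambda>x. card (Nb x)) ` Sm)" by auto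
    have mx: "\<forall>x\<in>Sm. card (Nb x) \<le> card (Nb x0)" using x0 fin1 by auto
    have all: "Nb x \<subseteq> Nb x0" if x: "x \<in> Sm" for x
    proof -
      have "x \<in> X" "x0 \<in> X" using x x0 unfolding Sm_def by auto
      then have "Nb x \<subseteq> Nb x0 \<or> Nb x0 \<subseteq> Nb x" using chain by auto
      moreover have "Nb x0 \<subseteq> Nb x \<Longrightarrow> Nb x0 = Nb x"
        using card_seteq[OF Nb_fin] mx x by metis
      ultimately show ?thesis by auto
    qed
    have "Nb x0 \<subset> Nb x'" using x0 unfolding Sm_def by auto
    then obtain y where "y \<in> Nb x'" "y \<notin> Nb x0" by auto
    then show ?thesis using all by auto
  qed
  then obtain y where y: "y \<in> Nb x'" "\<forall>x\<in>Sm. y \<notin> Nb x" by blast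
  have yY: "y \<in> Y" using y NbX x' by auto
  have yV: "y \<in> V" using yY XV by auto
  have x'V: "x' \<in> V" using x' XV by auto
  have "Nb y = U x'"
  proof
    show "Nb y \<subseteq> U x'"
    proof
      fix w assume w: "w \<in> Nb y"
      then have wX: "w \<in> X" using NbY yY by auto
      have wV: "w \<in> V" using w Nb_sub by auto
      have "y \<in> Nb w" using w Es yV wV unfolding Nb_def by auto
      moreover have "Nb w \<subseteq> Nb x' \<or> Nb x' \<subseteq> Nb w" using chain wX x' by auto
      ultimately have "Nb x' \<subseteq> Nb w" using y wX unfolding Sm_def by auto
      then show "w \<in> U x'" using wX unfolding U_def by auto
    qed
  next
    show "U x' \<subseteq> Nb y"
    proof
      fix w assume "w \<in> U x'"
      then have w: "w \<in> X" "Nb x' \<subseteq> Nb w" unfolding U_def by auto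
      then have "y \<in> Nb w" using y by auto
      moreover have wV: "w \<in> V" using w XV by auto
      ultimately show "w \<in> Nb y" using Es yV unfolding Nb_def by auto
    qed
  qed
  then show ?thesis using yY by auto
qed

definition phi :: "'a \<Rightarrow> 'a" where "phi x' = (SOME y. y \<in> Y \<and> Nb y = U x')"

lemma phi: "x' \<in> X \<Longrightarrow> phi x' \<in> Y \<and> Nb (phi x') = U x'"
proof -
  assume "x' \<in> X"
  then have "\<exists>y. y \<in> Y \<and> Nb y = U x'" using exY by blast
  then show ?thesis unfolding phi_def by (rule someI_ex)
qed

definition Lr :: "'a rel" where "Lr = {(x, x'). x \<in> X \<and> x' \<in> X \<and> Nb x' \<subseteq> Nb x}"

lemma Lr_lin: "linear_order_on X Lr"
  unfolding linear_order_on_def partial_order_on_def preorder_on_def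
proof (intro conjI)
  show "Lr \<subseteq> X \<times> X" unfolding Lr_def by auto
  show "refl_on X Lr" unfolding refl_on_def Lr_def by auto
  show "trans Lr" unfolding trans_on_def Lr_def by auto
  show "antisym Lr" unfolding antisym_on_def
  proof (intro ballI impI)
    fix x y assume "(x, y) \<in> Lr" "(y, x) \<in> Lr"
    then have "x \<in> X" "y \<in> X" "Nb x = Nb y" unfolding Lr_def by auto
    then show "x = y" using injNb XV by blast
  qed
  show "total_on X Lr" unfolding total_on_def
  proof (intro ballI impI)
    fix x y assume "x \<in> X" "y \<in> X" "x \<noteq> y"
    then show "(x, y) \<in> Lr \<or> (y, x) \<in> Lr" using chain[of x y] unfolding Lr_def by auto
  qed
qed

lemma E_phi: "x \<in> X \<Longrightarrow> x' \<in> X \<Longrightarrow> E x (phi x') \<longleftrightarrow> (x, x') \<in> Lr"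
proof -
  assume x: "x \<in> X" and x': "x' \<in> X"
  have p: "phi x' \<in> Y" "Nb (phi x') = U x'" using phi[OF x'] by auto
  have V: "x \<in> V" "phi x' \<in> V" using x p XV by auto
  have "E x (phi x') \<longleftrightarrow> x \<in> Nb (phi x')" using V Es unfolding Nb_def by auto
  also have "\<dots> \<longleftrightarrow> (x, x') \<in> Lr" using p x x' unfolding U_def Lr_def by auto
  finally show ?thesis .
qed

lemma phi_bij: "bij_betw phi X Y"
  unfolding bij_betw_def
proof
  show "inj_on phi X"
  proof (rule inj_onI)
    fix x1 x2 assume x: "x1 \<in> X" "x2 \<in> X" "phi x1 = phi x2"
    then have "U x1 = U x2" using phi by metis
    moreover have "x1 \<in> U x1" "x2 \<in> U x2" using x unfolding U_def by auto
    ultimately have "Nb x2 \<subseteq> Nb x1" "Nb x1 \<subseteq> Nb x2" unfolding U_def by auto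
    then show "x1 = x2" using injNb x XV by blast
  qed
  show "phi ` X = Y"
  proof
    show "phi ` X \<subseteq> Y" using phi by auto
    show "Y \<subseteq> phi ` X"
    proof
      fix y assume yY: "y \<in> Y"
      have yV: "y \<in> V" using yY XV by auto
      have ne: "Nb y \<noteq> {}" using noiso[OF yV] unfolding Nb_def by auto
      have NX: "Nb y \<subseteq> X" using NbY yY by auto
      have fin1: "finite ((\<lambda>x. card (Nb x)) ` Nb y)" using Nb_fin by auto
      have "Min ((\<lambda>x. card (Nb x)) ` Nb y) \<in> (\<lambda>x. card (Nb x)) ` Nb y" using fin1 ne by (intro Min_in) auto
      then obtain x' where x': "x' \<in> Nb y" "card (Nb x') = Min ((\<lambda>x. card (Nb x)) ` Nb y)" by auto
      have mn: "\<forall>x\<in>Nb y. card (Nb x') \<le> card (Nb x)" using x' fin1 by auto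
      have x'X: "x' \<in> X" using x' NX by auto
      have x'V: "x' \<in> V" using x'X XV by auto
      have "Nb y = U x'"
      proof
        show "Nb y \<subseteq> U x'"
        proof
          fix w assume w: "w \<in> Nb y"
          then have wX: "w \<in> X" using NX by auto
          have "Nb w \<subseteq> Nb x' \<or> Nb x' \<subseteq> Nb w" using chain wX x'X by auto
          moreover have "Nb w \<subseteq> Nb x' \<Longrightarrow> Nb w = Nb x'"
            using card_seteq[OF Nb_fin] mn w by metis
          ultimately have "Nb x' \<subseteq> Nb w" by auto
          then show "w \<in> U x'" using wX unfolding U_def by auto
        qed
      next
        show "U x' \<subseteq> Nb y"
        proof
          fix w assume "w \<in> U x'"
          then have w: "w \<in> X" "Nb x' \<subseteq> Nb w" unfolding U_def by auto
          have "y \<in> Nb x'" using x' Es yV x'V unfolding Nb_def by auto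
          then have "y \<in> Nb w" using w by auto
          moreover have wV: "w \<in> V" using w XV by auto
          ultimately show "w \<in> Nb y" using Es yV unfolding Nb_def by auto
        qed
      qed
      then have "Nb (phi x') = Nb y" using phi[OF x'X] by auto
      then have "phi x' = y" using injNb phi[OF x'X] XV yV by blast
      then show "y \<in> phi ` X" using x'X by auto
    qed
  qed
qed

lemma half: "half_graph V E"
  unfolding half_graph_def
proof (intro exI conjI)
  show "X \<union> Y = V" "X \<inter> Y = {}" using XY by auto
  show "linear_order_on X Lr" by (rule Lr_lin)
  show "bij_betw phi X Y" by (rule phi_bij)
  have im: "phi ` X = Y" using phi_bij unfolding bij_betw_def by auto
  show "\<forall>u\<in>V. \<forall>w\<in>V. E u w \<longleftrightarrow>
        (\<exists>x\<in>X. \<exists>x'\<in>X. (x, x') \<in> Lr \<and> ((u = x \<and> w = phi x') \<or> (w = x \<and> u = phi x')))"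
  proof (intro ballI iffI)
    fix u w assume uw: "u \<in> V" "w \<in> V" "E u w"
    show "\<exists>x\<in>X. \<exists>x'\<in>X. (x, x') \<in> Lr \<and> ((u = x \<and> w = phi x') \<or> (w = x \<and> u = phi x'))"
    proof (cases "u \<in> X")
      case True
      then have "w \<in> Y" using side uw by auto
      then obtain x' where x': "x' \<in> X" "w = phi x'" using im by auto
      then have "(u, x') \<in> Lr" using E_phi True uw by auto
      then show ?thesis using True x' by blast
    next
      case False
      then have uY: "u \<in> Y" using uw XY by auto
      then have wX: "w \<in> X" using side uw XY by blast
      obtain x' where x': "x' \<in> X" "u = phi x'" using im uY by auto
      have "E w u" using uw Es by auto
      then have "(w, x') \<in> Lr" using E_phi wX x' by auto
      then show ?thesis using wX x' by blast
    qed
  next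
    fix u w assume uw: "u \<in> V" "w \<in> V"
      and h: "\<exists>x\<in>X. \<exists>x'\<in>X. (x, x') \<in> Lr \<and> ((u = x \<and> w = phi x') \<or> (w = x \<and> u = phi x'))"
    then obtain x x' where x: "x \<in> X" "x' \<in> X" "(x, x') \<in> Lr"
      "(u = x \<and> w = phi x') \<or> (w = x \<and> u = phi x')" by blast
    have "E x (phi x')" using E_phi x by auto
    then show "E u w" using x uw Es by auto
  qed
qed

end


locale halfG = bip +
  fixes L :: "'a rel" and ph :: "'a \<Rightarrow> 'a"
  assumes lin: "linear_order_on X L" and bj: "bij_betw ph X Y"
    and edge: "\<forall>u\<in>V. \<forall>w\<in>V. E u w \<longleftrightarrow>
        (\<exists>x\<in>X. \<exists>x'\<in>X. (x, x') \<in> L \<and> ((u = x \<and> w = ph x') \<or> (w = x \<and> u = ph x')))"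
    and c4: "card V \<ge> 4"
begin

lemma Lrefl: "x \<in> X \<Longrightarrow> (x, x) \<in> L"
proof -
  assume x: "x \<in> X"
  have "refl_on X L" using lin unfolding linear_order_on_def partial_order_on_def preorder_on_def by simp
  then show ?thesis using x unfolding refl_on_def by simp
qed
lemma Ltrans: "(x, y) \<in> L \<Longrightarrow> (y, z) \<in> L \<Longrightarrow> (x, z) \<in> L"
proof -
  assume h: "(x, y) \<in> L" "(y, z) \<in> L"
  have "trans L" using lin unfolding linear_order_on_def partial_order_on_def preorder_on_def by simp
  then show ?thesis using transD h by metis
qed
lemma Lanti: "(x, y) \<in> L \<Longrightarrow> (y, x) \<in> L \<Longrightarrow> x = y"
proof -
  assume h: "(x, y) \<in> L" "(y, x) \<in> L"
  have "antisym L" using lin unfolding linear_order_on_def partial_order_on_def by simp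
  then show ?thesis using antisymD h by metis
qed
lemma Ltot: "x \<in> X \<Longrightarrow> y \<in> X \<Longrightarrow> (x, y) \<in> L \<or> (y, x) \<in> L"
proof -
  assume h: "x \<in> X" "y \<in> X"
  have "total_on X L" using lin unfolding linear_order_on_def by simp
  then show ?thesis using h Lrefl unfolding total_on_def by (cases "x = y") auto
qed

lemma phY: "x \<in> X \<Longrightarrow> ph x \<in> Y" using bj unfolding bij_betw_def by auto
lemma phinj: "x \<in> X \<Longrightarrow> y \<in> X \<Longrightarrow> ph x = ph y \<Longrightarrow> x = y"
  using bj unfolding bij_betw_def by (meson inj_onD)
lemma Yim: "y \<in> Y \<Longrightarrow> \<exists>x\<in>X. y = ph x" using bj unfolding bij_betw_def by auto
lemma XV: "X \<subseteq> V" "Y \<subseteq> V" using XY by auto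
lemma phnX: "x \<in> X \<Longrightarrow> ph x \<notin> X" using phY XY by blast
lemma phV: "x \<in> X \<Longrightarrow> ph x \<in> V" using phY XV by blast
lemma XnY: "x \<in> X \<Longrightarrow> x \<notin> Y" using XY by blast

lemma edge': "u \<in> V \<Longrightarrow> w \<in> V \<Longrightarrow> E u w \<longleftrightarrow>
        (\<exists>x\<in>X. \<exists>x'\<in>X. (x, x') \<in> L \<and> ((u = x \<and> w = ph x') \<or> (w = x \<and> u = ph x')))"
  using edge by simp

lemma HE: "x \<in> X \<Longrightarrow> x' \<in> X \<Longrightarrow> E x (ph x') \<longleftrightarrow> (x, x') \<in> L"
proof -
  assume x: "x \<in> X" and x': "x' \<in> X"
  have V: "x \<in> V" "ph x' \<in> V" using x x' phV XV by auto
  note iff = edge'[OF V]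
  show ?thesis
  proof
    assume e: "E x (ph x')"
    have ex: "\<exists>x1\<in>X. \<exists>x2\<in>X. (x1, x2) \<in> L \<and> ((x = x1 \<and> ph x' = ph x2) \<or> (ph x' = x1 \<and> x = ph x2))"
      using iff e by (rule iffD1)
    then obtain x1 x2 where h: "x1 \<in> X" "x2 \<in> X" "(x1, x2) \<in> L"
        "(x = x1 \<and> ph x' = ph x2) \<or> (ph x' = x1 \<and> x = ph x2)"
      by blast
    have "ph x' \<notin> X" using phnX[OF x'] .
    then have "x = x1" "ph x' = ph x2" using h by auto
    then show "(x, x') \<in> L" using phinj[OF x' h(2)] h by auto
  next
    assume "(x, x') \<in> L"
    then have "\<exists>x1\<in>X. \<exists>x2\<in>X. (x1, x2) \<in> L \<and> ((x = x1 \<and> ph x' = ph x2) \<or> (ph x' = x1 \<and> x = ph x2))"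
      using x x' by blast
    then show "E x (ph x')" by (rule iffD2[OF iff])
  qed
qed

lemma HE': "x \<in> X \<Longrightarrow> x' \<in> X \<Longrightarrow> E (ph x') x \<longleftrightarrow> (x, x') \<in> L"
proof -
  assume x: "x \<in> X" and x': "x' \<in> X"
  have "E (ph x') x = E x (ph x')" using Es[OF phV[OF x']] x XV by auto
  then show ?thesis using HE[OF x x'] by simp
qed

lemma cardX: "card X \<ge> 2"
proof -
  have "card Y = card X" using bij_betw_same_card[OF bj] by simp
  moreover have "card V = card X + card Y"
  proof -
    have "finite X" "finite Y" using finite_subset[OF XV(1) fin] finite_subset[OF XV(2) fin] by auto
    then show ?thesis using card_Un_disjoint[of X Y] XY by simp
  qed
  ultimately show ?thesis using c4 by simp
qed

lemma other: "a \<in> X \<Longrightarrow> \<exists>z\<in>X. z \<noteq> a"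
proof -
  assume a: "a \<in> X"
  have "X \<noteq> {a}"
  proof
    assume "X = {a}"
    then have "card X = 1" by simp
    then show False using cardX by simp
  qed
  then show ?thesis using a by blast
qed

lemma tw: "twinfree E V"
  unfolding twinfree_def
proof (intro ballI impI)
  have xx: "dist E V a b" if ab: "a \<in> X" "b \<in> X" "a \<noteq> b" "(a, b) \<in> L" for a b
  proof -
    have "E (ph a) a" using HE' ab Lrefl by auto
    moreover have "\<not> E (ph a) b" using HE'[OF ab(2) ab(1)] Lanti ab by auto
    moreover have "ph a \<in> Y" using phY ab by auto
    moreover then have "ph a \<in> V - {a, b}" using ab XY XV by auto
    ultimately show ?thesis unfolding dist_def by blast
  qed
  have yy: "dist E V (ph a) (ph b)" if ab: "a \<in> X" "b \<in> X" "a \<noteq> b" "(a, b) \<in> L" for a b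
  proof -
    have "E b (ph b)" using HE ab Lrefl by auto
    moreover have "\<not> E b (ph a)" using HE[OF ab(2) ab(1)] Lanti ab by auto
    moreover have "b \<in> V - {ph a, ph b}" using phnX[OF ab(1)] phnX[OF ab(2)] ab XV by auto
    ultimately show ?thesis unfolding dist_def by blast
  qed
  have xy: "dist E V a b" if ab: "a \<in> X" "b \<in> Y" for a b
  proof (cases "b = ph a")
    case False
    have "E (ph a) a" using HE' ab Lrefl by auto
    moreover have "\<not> E (ph a) b" using sameY phY ab by auto
    moreover have "ph a \<in> V - {a, b}" using phnX[OF ab(1)] phV[OF ab(1)] ab False by auto
    ultimately show ?thesis unfolding dist_def by blast
  next
    case True
    obtain z where z: "z \<in> X" "z \<noteq> a" using other ab by blast
    show ?thesis
    proof (cases "(a, z) \<in> L")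
      case True
      have "E (ph z) a" using HE' ab z True by auto
      moreover have "\<not> E (ph z) b" using sameY phY ab z by auto
      moreover have "ph z \<noteq> ph a" using phinj z ab by blast
      moreover have "ph z \<in> V - {a, b}" using phnX[OF z(1)] phV[OF z(1)] ab z `b = ph a` calculation by auto
      ultimately show ?thesis unfolding dist_def by blast
    next
      case False
      then have "(z, a) \<in> L" using Ltot z ab by blast
      then have "E z b" using HE z ab `b = ph a` by auto
      moreover have "\<not> E z a" using sameX ab z by auto
      moreover have "z \<in> V - {a, b}" using phnX[OF ab(1)] ab XV z `b = ph a` by auto
      ultimately show ?thesis unfolding dist_def by blast
    qed
  qed
  fix a b assume ab: "a \<in> V" "b \<in> V" "a \<noteq> b"
  consider "a \<in> X" "b \<in> X" | "a \<in> X" "b \<in> Y" | "a \<in> Y" "b \<in> X" | "a \<in> Y" "b \<in> Y"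
    using ab XY by blast
  then show "dist E V a b"
  proof cases
    case 1 then show ?thesis using xx[of a b] xx[of b a] Ltot dist_sym ab by metis
  next
    case 2 then show ?thesis using xy by auto
  next
    case 3 then show ?thesis using xy dist_sym by metis
  next
    case 4
    obtain a' b' where "a' \<in> X" "b' \<in> X" "a = ph a'" "b = ph b'" using 4 Yim by metis
    moreover then have "a' \<noteq> b'" using ab by auto
    ultimately show ?thesis using yy[of a' b'] yy[of b' a'] Ltot dist_sym by metis
  qed
qed

lemma cn: "conn E V"
  unfolding conn_def
proof (intro allI impI)
  fix A assume A: "A \<subseteq> V" "A \<noteq> {}" "A \<noteq> V"
  show "\<exists>a\<in>A. \<exists>b\<in>V - A. E a b"
  proof (rule ccontr)
    assume ne: "\<not> ?thesis"
    have m1: "x \<in> A \<longleftrightarrow> ph z \<in> A" if xz: "x \<in> X" "z \<in> X" "(x, z) \<in> L" for x z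
    proof -
      have e: "E x (ph z)" "E (ph z) x" using HE HE' xz by auto
      have V: "x \<in> V" "ph z \<in> V" using xz phY XV by auto
      have "\<not> (x \<in> A \<and> ph z \<notin> A)" using ne e(1) V by blast
      moreover have "\<not> (ph z \<in> A \<and> x \<notin> A)" using ne e(2) V by blast
      ultimately show ?thesis by blast
    qed
    have m2: "x \<in> A \<longleftrightarrow> z \<in> A" if xz: "x \<in> X" "z \<in> X" for x z
    proof (cases "(x, z) \<in> L")
      case True
      then show ?thesis using m1[OF xz True] m1[OF xz(2) xz(2) Lrefl[OF xz(2)]] by simp
    next
      case False
      then have "(z, x) \<in> L" using Ltot xz by blast
      then show ?thesis using m1[OF xz(2) xz(1)] m1[OF xz(1) xz(1) Lrefl[OF xz(1)]] by simp
    qed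
    have m3: "v \<in> A \<longleftrightarrow> w \<in> A" if vw: "v \<in> V" "w \<in> V" for v w
    proof -
      have r: "\<exists>x\<in>X. (u \<in> A \<longleftrightarrow> x \<in> A)" if u: "u \<in> V" for u
      proof (cases "u \<in> X")
        case True then show ?thesis by (intro bexI[of _ u]) auto
      next
        case False
        then have "u \<in> Y" using u XY by auto
        then obtain x where "x \<in> X" "u = ph x" using Yim by blast
        then show ?thesis using m1[of x x] Lrefl by auto
      qed
      obtain x where x: "x \<in> X" "v \<in> A \<longleftrightarrow> x \<in> A" using r[OF vw(1)] by blast
      obtain z where z: "z \<in> X" "w \<in> A \<longleftrightarrow> z \<in> A" using r[OF vw(2)] by blast
      have "x \<in> A \<longleftrightarrow> z \<in> A" using m2[OF x(1) z(1)] .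
      then show ?thesis using x(2) z(2) by simp
    qed
    obtain a where "a \<in> A" using A by auto
    obtain b where "b \<in> V - A" using A by auto
    then show False using m3[of a b] `a \<in> A` A by auto
  qed
qed

lemma hprime: "prime_graph V E"
  using PC[OF order_refl] tw cn c4 by auto

lemma maxL: "finite A \<Longrightarrow> A \<noteq> {} \<Longrightarrow> A \<subseteq> X \<Longrightarrow> \<exists>p\<in>A. \<forall>w\<in>A. (w, p) \<in> L"
proof (induction A rule: finite_ne_induct)
  case (singleton x) then show ?case using Lrefl by auto
next
  case (insert a A)
  then obtain p where p: "p \<in> A" "\<forall>w\<in>A. (w, p) \<in> L" by auto
  show ?case
  proof (cases "(p, a) \<in> L")
    case True
    then show ?thesis using p Ltrans Lrefl insert by blast
  next
    case False
    then have "(a, p) \<in> L" using Ltot insert p by blast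
    then show ?thesis using p by auto
  qed
qed

lemma minL: "finite A \<Longrightarrow> A \<noteq> {} \<Longrightarrow> A \<subseteq> X \<Longrightarrow> \<exists>p\<in>A. \<forall>w\<in>A. (p, w) \<in> L"
proof (induction A rule: finite_ne_induct)
  case (singleton x) then show ?case using Lrefl by auto
next
  case (insert a A)
  then obtain p where p: "p \<in> A" "\<forall>w\<in>A. (p, w) \<in> L" by auto
  show ?case
  proof (cases "(a, p) \<in> L")
    case True
    then show ?thesis using p Ltrans Lrefl insert by blast
  next
    case False
    then have "(p, a) \<in> L" using Ltot insert p by blast
    then show ?thesis using p by auto
  qed
qed

lemma del_not_prime: assumes v: "v \<in> V" shows "\<not> prime_graph (V - {v}) E"
proof -
  have fX: "finite X" using finite_subset[OF XV(1) fin] .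
  have "card (V - {v}) = card V - 1" using v fin by (simp add: card_Diff_singleton)
  then have cV: "card (V - {v}) \<ge> 3" using c4 by simp
  have sub: "V - {v} \<subseteq> V" by auto
  have iso: "\<not> conn E (V - {v})" if u: "u \<in> V - {v}" and nb: "\<forall>w\<in>V - {v}. \<not> E u w" for u
  proof
    assume c: "conn E (V - {v})"
    have ne: "{u} \<noteq> V - {v}"
    proof
      assume "{u} = V - {v}"
      then have "V - {v} = {u}" by simp
      then have "card (V - {v}) = 1" by simp
      then show False using cV by simp
    qed
    have h: "\<forall>A. A \<subseteq> V - {v} \<longrightarrow> A \<noteq> {} \<longrightarrow> A \<noteq> V - {v} \<longrightarrow> (\<exists>a\<in>A. \<exists>b\<in>(V - {v}) - A. E a b)"
      using c unfolding conn_def .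
    have "\<exists>a\<in>{u}. \<exists>b\<in>(V - {v}) - {u}. E a b" using h[rule_format, of "{u}"] u ne by blast
    then show False using nb by auto
  qed
  have twin: "\<not> twinfree E (V - {v})" if ab: "a \<in> V - {v}" "b \<in> V - {v}" "a \<noteq> b"
     and eq: "\<forall>w\<in>V - {v} - {a, b}. E w a = E w b" for a b
  proof
    assume "twinfree E (V - {v})"
    then have "dist E (V - {v}) a b" using ab unfolding twinfree_def by blast
    then obtain w where "w \<in> V - {v} - {a, b}" "E w a \<noteq> E w b" unfolding dist_def by blast
    then show False using eq by blast
  qed
  have "\<not> (twinfree E (V - {v}) \<and> conn E (V - {v}))"
  proof (cases "v \<in> X")
    case vX: True
    define Pd where "Pd = {x \<in> X. (x, v) \<in> L \<and> x \<noteq> v}"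
    show ?thesis
    proof (cases "Pd = {}")
      case True
      have u: "ph v \<in> V - {v}" using phnX[OF vX] phV[OF vX] vX by auto
      have "\<forall>w\<in>V - {v}. \<not> E (ph v) w"
      proof
        fix w assume w: "w \<in> V - {v}"
        show "\<not> E (ph v) w"
        proof
          assume e: "E (ph v) w"
          then have "w \<in> X" using side[OF _ _ e] u w phY[OF vX] XY by auto
          then have "(w, v) \<in> L" using HE' e vX by auto
          then show False using True w `w \<in> X` unfolding Pd_def by auto
        qed
      qed
      then show ?thesis using iso u by blast
    next
      case False
      obtain p where p: "p \<in> Pd" "\<forall>w\<in>Pd. (w, p) \<in> L" proof -
        have "Pd \<subseteq> X" unfolding Pd_def by auto
        moreover then have "finite Pd" using finite_subset[OF _ fX] by blast
        ultimately show ?thesis using maxL[of Pd] False that by blast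
      qed
      have pX: "p \<in> X" "(p, v) \<in> L" "p \<noteq> v" using p unfolding Pd_def by auto
      have "ph p \<noteq> ph v" using phinj pX vX by blast
      then have ab: "ph p \<in> V - {v}" "ph v \<in> V - {v}" "ph p \<noteq> ph v"
        using phnX[OF vX] phV[OF vX] phnX[OF pX(1)] phV[OF pX(1)] pX vX by auto
      have "\<forall>w\<in>V - {v} - {ph p, ph v}. E w (ph p) = E w (ph v)"
      proof
        fix w assume w: "w \<in> V - {v} - {ph p, ph v}"
        show "E w (ph p) = E w (ph v)"
        proof (cases "w \<in> X")
          case True
          have "(w, p) \<in> L \<longleftrightarrow> (w, v) \<in> L"
          proof
            assume "(w, p) \<in> L" then show "(w, v) \<in> L" using Ltrans pX by blast
          next
            assume "(w, v) \<in> L" then have "w \<in> Pd" using True w unfolding Pd_def by auto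
            then show "(w, p) \<in> L" using p by auto
          qed
          then show ?thesis using HE True pX vX by auto
        next
          case False
          then have "w \<in> Y" using w XY by auto
          then show ?thesis using sameY phY pX vX by auto
        qed
      qed
      then show ?thesis using twin ab by blast
    qed
  next
    case False
    then have "v \<in> Y" using v XY by auto
    then obtain x where x: "x \<in> X" "v = ph x" using Yim by blast
    define Sc where "Sc = {z \<in> X. (x, z) \<in> L \<and> z \<noteq> x}"
    show ?thesis
    proof (cases "Sc = {}")
      case True
      have u: "x \<in> V - {v}" using x phnX[OF x(1)] XV by auto
      have "\<forall>w\<in>V - {v}. \<not> E x w"
      proof
        fix w assume w: "w \<in> V - {v}"
        show "\<not> E x w"
        proof
          assume e: "E x w"
          then have "w \<in> Y" using side[OF _ _ e] u w x by auto
          then obtain z where z: "z \<in> X" "w = ph z" using Yim by blast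
          then have "(x, z) \<in> L" using HE e x by auto
          then have "z = x" using True z unfolding Sc_def by auto
          then show False using w z x by auto
        qed
      qed
      then show ?thesis using iso u by blast
    next
      case False
      obtain s where s: "s \<in> Sc" "\<forall>w\<in>Sc. (s, w) \<in> L" proof -
        have "Sc \<subseteq> X" unfolding Sc_def by auto
        moreover then have "finite Sc" using finite_subset[OF _ fX] by blast
        ultimately show ?thesis using minL[of Sc] False that by blast
      qed
      have sX: "s \<in> X" "(x, s) \<in> L" "s \<noteq> x" using s unfolding Sc_def by auto
      have ab: "x \<in> V - {v}" "s \<in> V - {v}" "x \<noteq> s"
        using phnX[OF x(1)] sX x XV by auto
      have "\<forall>w\<in>V - {v} - {x, s}. E w x = E w s"
      proof
        fix w assume w: "w \<in> V - {v} - {x, s}"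
        show "E w x = E w s"
        proof (cases "w \<in> X")
          case True
          then show ?thesis using sameX x sX by auto
        next
          case False
          then have "w \<in> Y" using w XY by auto
          then obtain z where z: "z \<in> X" "w = ph z" using Yim by blast
          have "z \<noteq> x" using z w x by auto
          have "(x, z) \<in> L \<longleftrightarrow> (s, z) \<in> L"
          proof
            assume "(s, z) \<in> L" then show "(x, z) \<in> L" using Ltrans sX by blast
          next
            assume "(x, z) \<in> L" then have "z \<in> Sc" using z `z \<noteq> x` unfolding Sc_def by auto
            then show "(s, z) \<in> L" using s by auto
          qed
          then show ?thesis using HE' z x sX by auto
        qed
      qed
      then show ?thesis using twin ab by blast
    qed
  qed
  then show ?thesis using PC[OF sub cV] by auto
qed

lemma hnoP5: "\<not> induced_le P5_V P5_E V E"
proof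
  assume "induced_le P5_V P5_E V E"
  then obtain f where f: "inj_on f P5_V" "f ` P5_V \<subseteq> V" "\<forall>i\<in>P5_V. \<forall>j\<in>P5_V. P5_E i j = E (f i) (f j)"
    unfolding induced_le_def by (elim exE conjE) blast
  have Ef: "E (f i) (f j) = P5_E i j" if "i < 5" "j < 5" for i j using f(3) that unfolding P5_V_def by auto
  have fV: "f i \<in> V" if "i < 5" for i using f(2) that unfolding P5_V_def by auto
  have cross: "\<not> E u w" if "u \<in> {f 0, f 1}" "w \<in> {f 3, f 4}" for u w
    using that Ef[of 0 3] Ef[of 0 4] Ef[of 1 3] Ef[of 1 4] by (auto simp: P5_E_def)
  have cross': "\<not> E u w" if "u \<in> {f 3, f 4}" "w \<in> {f 0, f 1}" for u w
    using that Ef[of 3 0] Ef[of 4 0] Ef[of 3 1] Ef[of 4 1] by (auto simp: P5_E_def)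
  have e1: "E (f 0) (f 1)" and e2: "E (f 3) (f 4)" using Ef[of 0 1] Ef[of 3 4] by (auto simp: P5_E_def)
  have ed: "\<exists>x\<in>X. \<exists>x'\<in>X. (x, x') \<in> L \<and> x \<in> {u, w} \<and> ph x' \<in> {u, w}"
    if "u \<in> V" "w \<in> V" "E u w" for u w
  proof -
    have "\<exists>x\<in>X. \<exists>x'\<in>X. (x, x') \<in> L \<and> ((u = x \<and> w = ph x') \<or> (w = x \<and> u = ph x'))"
      using edge'[OF that(1,2)] that(3) by (rule iffD1)
    then obtain x x' where "x \<in> X" "x' \<in> X" "(x, x') \<in> L" "(u = x \<and> w = ph x') \<or> (w = x \<and> u = ph x')"
      by blast
    then show ?thesis by blast
  qed
  obtain a b where ab: "a \<in> X" "b \<in> X" "(a, b) \<in> L" "a \<in> {f 0, f 1}" "ph b \<in> {f 0, f 1}"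
    using ed[OF fV[of 0] fV[of 1] e1] by auto
  obtain c d where cd: "c \<in> X" "d \<in> X" "(c, d) \<in> L" "c \<in> {f 3, f 4}" "ph d \<in> {f 3, f 4}"
    using ed[OF fV[of 3] fV[of 4] e2] by auto
  have "\<not> E a (ph d)" using cross ab cd by auto
  then have "(a, d) \<notin> L" using HE ab cd by auto
  then have da: "(d, a) \<in> L" using Ltot ab cd by blast
  have "\<not> E c (ph b)" using cross' ab cd by auto
  then have "(c, b) \<notin> L" using HE ab cd by auto
  then have bc: "(b, c) \<in> L" using Ltot ab cd by blast
  have "(a, d) \<in> L" using Ltrans[OF Ltrans[OF ab(3) bc] cd(3)] .
  then show False using `(a, d) \<notin> L` by simp
qed

end


lemma half_crit:
  assumes g: "graph V E" and c: "card V \<ge> 4" and h: "half_graph V E"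
  shows "critical V E \<and> \<not> induced_le P5_V P5_E V E"
proof -
  obtain X Y L ph where H: "X \<union> Y = V" "X \<inter> Y = {}" "linear_order_on X L" "bij_betw ph X Y"
    "\<forall>u\<in>V. \<forall>w\<in>V. E u w \<longleftrightarrow>
        (\<exists>x\<in>X. \<exists>x'\<in>X. (x, x') \<in> L \<and> ((u = x \<and> w = ph x') \<or> (w = x \<and> u = ph x')))"
    using h unfolding half_graph_def by blast
  have phY: "x \<in> X \<Longrightarrow> ph x \<in> Y" for x using H(4) unfolding bij_betw_def by auto
  have bp: "bipartition V E X Y"
    unfolding bipartition_def
  proof (intro conjI ballI impI)
    show "X \<union> Y = V" "X \<inter> Y = {}" using H by auto
    fix x y assume xy: "x \<in> V" "y \<in> V" "E x y"
    have "\<exists>a\<in>X. \<exists>b\<in>X. (a, b) \<in> L \<and> ((x = a \<and> y = ph b) \<or> (y = a \<and> x = ph b))"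
      using H(5) xy by blast
    then obtain a b where ab: "a \<in> X" "b \<in> X" "(x = a \<and> y = ph b) \<or> (y = a \<and> x = ph b)" by blast
    have "ph b \<in> Y" using phY ab by auto
    then show "x \<in> X \<longleftrightarrow> y \<in> Y" using ab H(2) by blast
  qed
  have hg: "halfG V E X Y L ph"
    unfolding halfG_def halfG_axioms_def bip_def using g bp H c by blast
  have "prime_graph V E" using halfG.hprime[OF hg] .
  moreover have "\<forall>v\<in>V. \<not> prime_graph (V - {v}) E" using halfG.del_not_prime[OF hg] by blast
  ultimately show ?thesis using halfG.hnoP5[OF hg] unfolding critical_def by blast
qed

lemma prime_half:
  assumes g: "graph V E" and b: "bipartite V E" and c: "card V \<ge> 4"
    and p: "prime_graph V E" and n: "\<not> induced_le P5_V P5_E V E"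
  shows "half_graph V E"
proof -
  obtain X Y where bp: "bipartition V E X Y" using b unfolding bipartite_def by blast
  have "bipP V E X Y" unfolding bipP_def bipP_axioms_def bip_def using g bp c p n by blast
  then show ?thesis using bipP.half by blast
qed

lemma crit_noP5:
  assumes g: "graph V E" and b: "bipartite V E" and cr: "critical V E"
  shows "\<not> induced_le P5_V P5_E V E"
proof -
  obtain X Y where bp: "bipartition V E X Y" using b unfolding bipartite_def by blast
  have "bip V E X Y" unfolding bip_def using g bp by blast
  then show ?thesis using bip.critical_noP5 cr by blast
qed

theorem proposition5p1:
  fixes V :: "'a set" and E :: "'a \<Rightarrow> 'a \<Rightarrow> bool"
  assumes "graph V E" and "bipartite V E" and "card V \<ge> 4"
  shows "((\<not> induced_le P5_V P5_E V E \<and> prime_graph V E) \<longleftrightarrow> critical V E)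
       \<and> (critical V E \<longleftrightarrow> half_graph V E)"
proof -
  have A: "critical V E" if "\<not> induced_le P5_V P5_E V E" "prime_graph V E"
    using half_crit[OF assms(1,3) prime_half[OF assms that(2,1)]] by blast
  have B: "\<not> induced_le P5_V P5_E V E \<and> prime_graph V E" if "critical V E"
    using crit_noP5[OF assms(1,2) that] that unfolding critical_def by blast
  have C: "half_graph V E" if "critical V E"
    using B[OF that] prime_half[OF assms] by blast
  have D: "critical V E" if "half_graph V E"
    using half_crit[OF assms(1,3) that] by blast
  show ?thesis using A B C D by blast
qed


end
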